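(* Let $K\subseteq L$ be convex bodies in $\mathbb{R}^d$ with the origin in the interior of $K$, and let $F$ be a non-trivial linear subspace of $\mathbb{R}^d$. Assume there are contact pairs $(v_1,p_1),\dots,(v_m,p_m)$ of $K$ and $L$ and positive weights $\alpha_1,\dots,\alpha_m$ such that \[ P_F\Big(\sum_{i}\alpha_i p_i\otimes v_i\Big)P_F=P_F,\quad \sum_i\alpha_ip_i=0,\quad \operatorname{tr}\Big(\sum_i\alpha_ip_i\otimes v_i\Big)=\sum_i\alpha_i=d,\quad \sum_i\alpha_iP_Fv_i=0. \] Let $K_{\mathrm{in}}=\operatorname{conv}\{v_1,\dots,v_m\}$ and $L_{\mathrm{out}}=\bigcap_{i=1}^m\{x\in\mathbb{R}^d:\langle p_i,x\rangle\le1\}$. Then \[ L_{\mathrm{out}}\cap F\subset -d\cdot P_FK_{\mathrm{in}}. \]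
   Context: A convex body is a compact convex set with nonempty interior. $P_F$ is orthogonal projection onto $F$. The polar of $S$ is $S^\circ=\{p:\langle x,p\rangle\le1\ \forall x\in S\}$. For convex bodies $K\subseteq L$, a contact pair of $K$ and $L$ is a pair $(v,p)$ with $v\in\partial K\cap\partial L$, $p\in\partial K^\circ\cap\partial L^\circ$, $\langle p,v\rangle=1$. For vectors $p,v$, $p\otimes v$ is the operator $x\mapsto\langle v,x\rangle p$. *)

theory Defs
  imports "HOL-Analysis.Analysis"
begin

definition convex_body :: "'a::euclidean_space set \<Rightarrow> bool" where
  "convex_body S \<longleftrightarrow> compact S \<and> convex S \<and> interior S \<noteq> {}"

definition polar :: "'a::euclidean_space set \<Rightarrow> 'a set" where
  "polar S = {p. \<forall>x\<in>S. x \<bullet> p \<le> 1}"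

definition contact_pair :: "'a::euclidean_space set \<Rightarrow> 'a set \<Rightarrow> 'a \<Rightarrow> 'a \<Rightarrow> bool" where
  "contact_pair K L v p \<longleftrightarrow>
     v \<in> frontier K \<inter> frontier L \<and> p \<in> frontier (polar K) \<inter> frontier (polar L) \<and> p \<bullet> v = 1"

definition orth_proj :: "'a::euclidean_space set \<Rightarrow> 'a \<Rightarrow> 'a" where
  "orth_proj F x = (THE y. y \<in> F \<and> (\<forall>z\<in>F. (x - y) \<bullet> z = 0))"

definition tensor :: "'a::euclidean_space \<Rightarrow> 'a \<Rightarrow> 'a \<Rightarrow> 'a" where
  "tensor p v = (\<lambda>x. (v \<bullet> x) *\<^sub>R p)"

definition trace_op :: "('a::euclidean_space \<Rightarrow> 'a) \<Rightarrow> real" where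
  "trace_op A = (\<Sum>b\<in>Basis. A b \<bullet> b)"

end

theory Submission
  imports Defs
begin

lemma orth_proj_char:
  fixes F :: "'a::euclidean_space set"
  assumes "subspace F"
  shows "orth_proj F x \<in> F \<and> (\<forall>z\<in>F. (x - orth_proj F x) \<bullet> z = 0)"
proof -
  have sp: "span F = F" using assms by (simp add: span_eq_iff)
  obtain y z where y: "y \<in> span F" and z: "\<And>w. w \<in> span F \<Longrightarrow> orthogonal z w" and xyz: "x = y + z"
    using orthogonal_subspace_decomp_exists[of F x] by blast
  have ex: "y \<in> F \<and> (\<forall>w\<in>F. (x - y) \<bullet> w = 0)"
    using y z xyz sp by (auto simp: orthogonal_def)
  have uniq: "u = y" if "u \<in> F \<and> (\<forall>w\<in>F. (x - u) \<bullet> w = 0)" for u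
  proof -
    have "y - u \<in> F" using that ex assms by (simp add: subspace_diff)
    then have "(x - u) \<bullet> (y - u) = 0" "(x - y) \<bullet> (y - u) = 0" using that ex by auto
    then have "(y - u) \<bullet> (y - u) = 0" by (simp add: inner_diff_left inner_diff_right)
    then show ?thesis by simp
  qed
  have "orth_proj F x = y" unfolding orth_proj_def
    using ex uniq by (rule the_equality)
  then show ?thesis using ex by simp
qed

lemma orth_proj_unique:
  fixes F :: "'a::euclidean_space set"
  assumes "subspace F" "w \<in> F" "\<forall>z\<in>F. (x - w) \<bullet> z = 0"
  shows "orth_proj F x = w"
proof -
  have c: "orth_proj F x \<in> F" "\<forall>z\<in>F. (x - orth_proj F x) \<bullet> z = 0"
    using orth_proj_char[OF assms(1)] by auto
  have "w - orth_proj F x \<in> F" using c assms by (simp add: subspace_diff)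
  then have "(x - orth_proj F x) \<bullet> (w - orth_proj F x) = 0" "(x - w) \<bullet> (w - orth_proj F x) = 0"
    using c assms by auto
  then have "(w - orth_proj F x) \<bullet> (w - orth_proj F x) = 0" by (simp add: inner_diff_left inner_diff_right)
  then show ?thesis by simp
qed

lemma orth_proj_inF:
  fixes F :: "'a::euclidean_space set"
  assumes "subspace F" "z \<in> F"
  shows "z \<bullet> orth_proj F u = z \<bullet> u"
proof -
  have "(u - orth_proj F u) \<bullet> z = 0" using orth_proj_char[OF assms(1)] assms(2) by auto
  then show ?thesis by (simp add: inner_diff_left inner_diff_right inner_commute)
qed

lemma orth_proj_sym:
  fixes F :: "'a::euclidean_space set"
  assumes "subspace F"
  shows "u \<bullet> orth_proj F y = orth_proj F u \<bullet> y"
proof -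
  have a: "orth_proj F y \<bullet> orth_proj F u = orth_proj F y \<bullet> u"
    using orth_proj_inF[OF assms] orth_proj_char[OF assms] by blast
  have b: "orth_proj F u \<bullet> orth_proj F y = orth_proj F u \<bullet> y"
    using orth_proj_inF[OF assms] orth_proj_char[OF assms] by blast
  show ?thesis using a b by (simp add: inner_commute)
qed

theorem mainTheorem10:
  fixes K L F :: "'a::euclidean_space set"
    and m :: nat and v p :: "nat \<Rightarrow> 'a" and \<alpha> :: "nat \<Rightarrow> real"
  assumes "convex_body K" and "convex_body L" and "K \<subseteq> L" and "0 \<in> interior K"
    and "subspace F" and "F \<noteq> {0}"
    and "\<And>i. i < m \<Longrightarrow> contact_pair K L (v i) (p i)"
    and "\<And>i. i < m \<Longrightarrow> \<alpha> i > 0"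
    and "\<And>x. orth_proj F ((\<lambda>y. \<Sum>i<m. \<alpha> i *\<^sub>R tensor (p i) (v i) y) (orth_proj F x))
               = orth_proj F x"
    and "(\<Sum>i<m. \<alpha> i *\<^sub>R p i) = 0"
    and "trace_op (\<lambda>y. \<Sum>i<m. \<alpha> i *\<^sub>R tensor (p i) (v i) y) = real DIM('a)"
    and "(\<Sum>i<m. \<alpha> i) = real DIM('a)"
    and "(\<Sum>i<m. \<alpha> i *\<^sub>R orth_proj F (v i)) = 0"
  shows "(\<Inter>i<m. {x. p i \<bullet> x \<le> 1}) \<inter> F
           \<subseteq> (\<lambda>x. - real DIM('a) *\<^sub>R x) ` (orth_proj F ` (convex hull (v ` {..<m})))"
proof
  fix x assume xin: "x \<in> (\<Inter>i<m. {x. p i \<bullet> x \<le> 1}) \<inter> F"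
  then have xF: "x \<in> F" and px: "\<And>i. i < m \<Longrightarrow> p i \<bullet> x \<le> 1" by auto
  let ?P = "orth_proj F"
  define d where "d = real DIM('a)"
  have dpos: "d > 0" unfolding d_def by simp
  define w where "w = (\<Sum>i<m. (\<alpha> i * (p i \<bullet> x)) *\<^sub>R ?P (v i))"
  have wy: "w \<bullet> y = x \<bullet> y" for y
  proof -
    have "x \<bullet> ?P (\<Sum>i<m. \<alpha> i *\<^sub>R tensor (p i) (v i) (?P y)) = x \<bullet> ?P y"
      using assms(9) by simp
    then have "x \<bullet> (\<Sum>i<m. \<alpha> i *\<^sub>R tensor (p i) (v i) (?P y)) = x \<bullet> y"
      using orth_proj_inF[OF assms(5) xF] by simp
    moreover have "x \<bullet> (\<Sum>i<m. \<alpha> i *\<^sub>R tensor (p i) (v i) (?P y))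
        = (\<Sum>i<m. \<alpha> i * (v i \<bullet> ?P y) * (x \<bullet> p i))"
      by (simp add: tensor_def inner_sum_right)
    moreover have "w \<bullet> y = (\<Sum>i<m. \<alpha> i * (p i \<bullet> x) * (?P (v i) \<bullet> y))"
      by (simp add: w_def inner_sum_left)
    moreover have "\<And>i. v i \<bullet> ?P y = ?P (v i) \<bullet> y" using orth_proj_sym[OF assms(5)] by blast
    ultimately show ?thesis by (simp add: inner_commute mult.commute mult.left_commute)
  qed
  have wx: "w = x"
  proof -
    have "(w - x) \<bullet> (w - x) = 0" using wy[of "w - x"] by (simp add: inner_diff_left)
    then show ?thesis by simp
  qed
  define lam where "lam i = \<alpha> i * (1 - p i \<bullet> x) / d" for i
  have lnn: "\<And>i. i \<in> {..<m} \<Longrightarrow> lam i \<ge> 0"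
    proof -
    fix i assume "i \<in> {..<m}"
    then have "\<alpha> i > 0" "p i \<bullet> x \<le> 1" using px assms(8) by auto
    then show "lam i \<ge> 0" unfolding lam_def using dpos by simp
  qed
  have "(\<Sum>i<m. \<alpha> i * (p i \<bullet> x)) = (\<Sum>i<m. \<alpha> i *\<^sub>R p i) \<bullet> x"
    by (simp add: inner_sum_left)
  then have s0: "(\<Sum>i<m. \<alpha> i * (p i \<bullet> x)) = 0" using assms(10) by simp
  have lsum: "(\<Sum>i<m. lam i) = 1"
  proof -
    have "(\<Sum>i<m. lam i) = (\<Sum>i<m. \<alpha> i - \<alpha> i * (p i \<bullet> x)) / d"
      unfolding lam_def by (simp add: sum_divide_distrib algebra_simps)
    also have "\<dots> = 1" using s0 assms(12) dpos unfolding d_def by (simp add: sum_subtractf)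
    finally show ?thesis .
  qed
  define y where "y = (\<Sum>i<m. lam i *\<^sub>R v i)"
  have yin: "y \<in> convex hull (v ` {..<m})"
    unfolding y_def
    by (rule convex_sum) (auto simp: lsum lnn intro: hull_inc)
  have Py: "?P y = (- 1 / d) *\<^sub>R x"
  proof (rule orth_proj_unique[OF assms(5)])
    show "(- 1 / d) *\<^sub>R x \<in> F" using xF assms(5) by (simp add: subspace_scale subspace_neg)
    show "\<forall>z\<in>F. (y - (- 1 / d) *\<^sub>R x) \<bullet> z = 0"
    proof
      fix z assume zF: "z \<in> F"
      have "y \<bullet> z = (\<Sum>i<m. lam i * (v i \<bullet> z))" by (simp add: y_def inner_sum_left)
      also have "\<dots> = (\<Sum>i<m. lam i * (?P (v i) \<bullet> z))"
        using orth_proj_inF[OF assms(5) zF] by (simp add: inner_commute)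
      also have "\<dots> = (\<Sum>i<m. lam i *\<^sub>R ?P (v i)) \<bullet> z" by (simp add: inner_sum_left)
      also have "(\<Sum>i<m. lam i *\<^sub>R ?P (v i)) = (1/d) *\<^sub>R ((\<Sum>i<m. \<alpha> i *\<^sub>R ?P (v i)) - w)"
        unfolding lam_def w_def
        by (simp add: scaleR_sum_right sum_subtractf[symmetric] scaleR_diff_left[symmetric] diff_divide_distrib right_diff_distrib)
      also have "\<dots> = (- 1 / d) *\<^sub>R x" using assms(13) wx by simp
      finally show "(y - (- 1 / d) *\<^sub>R x) \<bullet> z = 0" by (simp add: inner_add_left)
    qed
  qed
  have "x = - d *\<^sub>R ?P y" using dpos by (simp add: Py)
  then show "x \<in> (\<lambda>x. - real DIM('a) *\<^sub>R x) ` (orth_proj F ` (convex hull (v ` {..<m})))"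
    using yin unfolding d_def by blast
qed

end
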